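(* Let $\mathcal{Y}_u=\{y_1,\dots,y_L\}$ be a finite set of (unseen test) class labels, and let $\mathbf{A}$ be a label–attribute matrix assigning to each label $y\in\mathcal{Y}_u$ a binary attribute vector $\mathbf{a}_y\in\{0,1\}^{N_a}$, where the vectors $\mathbf{a}_y$, $y\in\mathcal{Y}_u$, are pairwise distinct. Let $f^{(1)},\dots,f^{(N_a)}$ be binary attribute classifiers (e.g. trained on a training set $D_s$), and write $f(x)=(f^{(1)}(x),\dots,f^{(N_a)}(x))\in\{0,1\}^{N_a}$. Each input $x$ is classified by assigning it a label $\hat y(x)\in\mathcal{Y}_u$ whose attribute vector is closest to $f(x)$, i.e. $d(f(x),\mathbf{a}_{\hat y(x)})\le d(f(x),\mathbf{a}_{y})$ for all $y\in\mathcal{Y}_u$ (ties broken arbitrarily). Let $D_u=\{(x_i,y_i): i=1,\dots,N_u\}$ with $y_i\in\mathcal{Y}_u$ be a test set, and for each $m=1,\dots,N_a$ let $B_m\ge 0$ be an upper bound on the prediction loss of the $m$-th attribute classifier, i.e. $\frac{1}{N_u}\sum_{i=1}^{N_u}\Delta\big(f^{(m)}(x_i),\mathbf{a}_{y_i}^{(m)}\big)\le B_m$. Set $\bar B=\frac{1}{N_a}\sum_{m=1}^{N_a}B_m$. Then the generalization error rate $k/N_u$, where $k=\#\{i:\hat y(x_i)\neq y_i\}$ is the number of misclassified test samples, satisfies $$\frac{k}{N_u}\le \frac{2N_a\bar B}{\tau}.$$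
   Context: For binary values $a,b$, $\Delta(a,b)=1$ if $a\neq b$ and $0$ otherwise. For vectors $\mathbf{u},\mathbf{v}\in\{0,1\}^{N_a}$ with $m$-th entries $\mathbf{u}^{(m)},\mathbf{v}^{(m)}$, the generalized attribute distance is the Hamming distance $d(\mathbf{u},\mathbf{v})=\sum_{m=1}^{N_a}\Delta(\mathbf{u}^{(m)},\mathbf{v}^{(m)})$. The minimum attribute distance of $\mathbf{A}$ is $\tau=\min_{y\neq y'}d(\mathbf{a}_y,\mathbf{a}_{y'})$, the minimum over pairs of distinct labels $y,y'\in\mathcal{Y}_u$ (so $\tau\ge 1$). *)

theory Defs
  imports Main Complex_Main
begin

text \<open>Binary vectors in {0,1}^Na are modelled as functions nat => bool,
  of which only the entries 0..Na-1 are relevant.\<close>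

definition Delta :: "bool \<Rightarrow> bool \<Rightarrow> nat" where
  "Delta a b = (if a \<noteq> b then 1 else 0)"

definition attr_dist :: "nat \<Rightarrow> (nat \<Rightarrow> bool) \<Rightarrow> (nat \<Rightarrow> bool) \<Rightarrow> nat" where
  "attr_dist Na u v = (\<Sum>m<Na. Delta (u m) (v m))"

definition min_attr_dist :: "nat \<Rightarrow> 'y set \<Rightarrow> ('y \<Rightarrow> nat \<Rightarrow> bool) \<Rightarrow> nat" where
  "min_attr_dist Na Y a = Min {attr_dist Na (a y) (a y') | y y'. y \<in> Y \<and> y' \<in> Y \<and> y \<noteq> y'}"

end

theory Submission
  imports Defs
begin

lemma Delta_sym: "Delta a b = Delta b a" by (auto simp: Delta_def)
lemma Delta_tri: "Delta a c \<le> Delta a b + Delta b c" by (auto simp: Delta_def)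

lemma dist_sym: "attr_dist N u v = attr_dist N v u"
  unfolding attr_dist_def by (metis Delta_sym)

lemma dist_tri: "attr_dist N u w \<le> attr_dist N u v + attr_dist N v w"
  unfolding attr_dist_def sum.distrib[symmetric] by (intro sum_mono Delta_tri)

lemma dist_pos:
  assumes "\<exists>m<N. u m \<noteq> v m" shows "attr_dist N u v > 0"
proof -
  obtain m where m: "m < N" "u m \<noteq> v m" using assms by blast
  have "Delta (u m) (v m) \<le> (\<Sum>k<N. Delta (u k) (v k))"
    using m(1) by (intro member_le_sum) auto
  moreover have "Delta (u m) (v m) = 1" using m(2) by (simp add: Delta_def)
  ultimately show ?thesis unfolding attr_dist_def by simp
qed

lemma min_le:
  assumes "finite Y" "y \<in> Y" "y' \<in> Y" "y \<noteq> y'"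
  shows "min_attr_dist N Y a \<le> attr_dist N (a y) (a y')"
proof -
  have "{attr_dist N (a y) (a y') | y y'. y \<in> Y \<and> y' \<in> Y \<and> y \<noteq> y'}
        \<subseteq> (\<lambda>(y,y'). attr_dist N (a y) (a y')) ` (Y \<times> Y)" by auto
  hence "finite {attr_dist N (a y) (a y') | y y'. y \<in> Y \<and> y' \<in> Y \<and> y \<noteq> y'}"
    using assms(1) by (meson finite_SigmaI finite_imageI finite_subset)
  thus ?thesis unfolding min_attr_dist_def using assms by (intro Min_le) auto
qed

lemma min_pos:
  assumes "finite Y" "card Y \<ge> 2"
    and "\<And>y y'. y \<in> Y \<Longrightarrow> y' \<in> Y \<Longrightarrow> y \<noteq> y' \<Longrightarrow> \<exists>m<N. a y m \<noteq> a y' m"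
  shows "min_attr_dist N Y a > 0"
proof -
  let ?S = "{attr_dist N (a y) (a y') | y y'. y \<in> Y \<and> y' \<in> Y \<and> y \<noteq> y'}"
  have "?S \<subseteq> (\<lambda>(y,y'). attr_dist N (a y) (a y')) ` (Y \<times> Y)" by auto
  hence fin: "finite ?S"
    using assms(1) by (meson finite_SigmaI finite_imageI finite_subset)
  have "\<not> (\<forall>a\<in>Y. \<forall>b\<in>Y. a = b)" using assms(2) card_le_Suc0_iff_eq[OF assms(1)] by simp
  then obtain y y' where "y \<in> Y" "y' \<in> Y" "y \<noteq> y'" by blast
  hence ne: "?S \<noteq> {}" by auto
  have pos: "\<forall>s\<in>?S. s > 0"
  proof
    fix s assume "s \<in> ?S"
    then obtain z z' where "s = attr_dist N (a z) (a z')" "z \<in> Y" "z' \<in> Y" "z \<noteq> z'" by blast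
    thus "s > 0" using assms(3) dist_pos by metis
  qed
  have "Min ?S \<in> ?S" by (rule Min_in[OF fin ne])
  thus ?thesis unfolding min_attr_dist_def using pos by simp
qed

theorem theorem1:
  fixes Y :: "'y set" and a :: "'y \<Rightarrow> nat \<Rightarrow> bool" and Na :: nat
    and f :: "'x \<Rightarrow> nat \<Rightarrow> bool" and yhat :: "'x \<Rightarrow> 'y"
    and Nu :: nat and xs :: "nat \<Rightarrow> 'x" and ys :: "nat \<Rightarrow> 'y"
    and B :: "nat \<Rightarrow> real"
  assumes finY: "finite Y" and cardY: "card Y \<ge> 2"
    and distinct: "\<And>y y'. y \<in> Y \<Longrightarrow> y' \<in> Y \<Longrightarrow> y \<noteq> y' \<Longrightarrow>
                     \<exists>m<Na. a y m \<noteq> a y' m"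
    and yhat_in: "\<And>x. yhat x \<in> Y"
    and yhat_min: "\<And>x y. y \<in> Y \<Longrightarrow> attr_dist Na (f x) (a (yhat x)) \<le> attr_dist Na (f x) (a y)"
    and Nu_pos: "Nu > 0"
    and ys_in: "\<And>i. i < Nu \<Longrightarrow> ys i \<in> Y"
    and B_nonneg: "\<And>m. m < Na \<Longrightarrow> B m \<ge> 0"
    and B_bound: "\<And>m. m < Na \<Longrightarrow>
        (\<Sum>i<Nu. real (Delta (f (xs i) m) (a (ys i) m))) / real Nu \<le> B m"
  shows "real (card {i. i < Nu \<and> yhat (xs i) \<noteq> ys i}) / real Nu
           \<le> 2 * real Na * ((\<Sum>m<Na. B m) / real Na) / real (min_attr_dist Na Y a)"
proof -
  define t where "t = min_attr_dist Na Y a"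
  define K where "K = {i. i < Nu \<and> yhat (xs i) \<noteq> ys i}"
  define d where "d i = attr_dist Na (f (xs i)) (a (ys i))" for i
  have tpos: "t > 0" unfolding t_def using min_pos[where a=a and N=Na, OF finY cardY distinct] by simp
  have "\<not> (\<forall>a\<in>Y. \<forall>b\<in>Y. a = b)" using cardY card_le_Suc0_iff_eq[OF finY] by simp
  then obtain y y' where "y \<in> Y" "y' \<in> Y" "y \<noteq> y'" by blast
  then have "\<exists>m<Na. a y m \<noteq> a y' m" by (rule distinct)
  then have "Na > 0" by auto
  have key: "t \<le> 2 * d i" if "i \<in> K" for i
  proof -
    have "t \<le> attr_dist Na (a (yhat (xs i))) (a (ys i))"
      unfolding t_def using that ys_in yhat_in finY by (intro min_le) (auto simp: K_def)
    also have "\<dots> \<le> attr_dist Na (a (yhat (xs i))) (f (xs i)) + attr_dist Na (f (xs i)) (a (ys i))"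
      by (rule dist_tri)
    also have "\<dots> \<le> 2 * d i" using yhat_min[of "ys i" "xs i"] that ys_in
      by (auto simp: K_def d_def dist_sym[of Na "a (yhat (xs i))"])
    finally show ?thesis .
  qed
  have finK: "finite K" "K \<subseteq> {..<Nu}" by (auto simp: K_def)
  have "real (card K) * real t = (\<Sum>i\<in>K. real t)" by simp
  also have "\<dots> \<le> (\<Sum>i\<in>K. 2 * real (d i))" 
    by (intro sum_mono) (use key in force)
  also have "\<dots> \<le> (\<Sum>i<Nu. 2 * real (d i))"
    by (intro sum_mono2 finK) auto
  also have "\<dots> = 2 * (\<Sum>m<Na. (\<Sum>i<Nu. real (Delta (f (xs i) m) (a (ys i) m))))"
    unfolding d_def attr_dist_def by (simp add: sum_distrib_left sum.swap[of _ "{..<Nu}"])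
  also have "\<dots> \<le> 2 * (\<Sum>m<Na. real Nu * B m)"
  proof -
    have h: "(\<Sum>i<Nu. real (Delta (f (xs i) m) (a (ys i) m))) \<le> real Nu * B m" if "m < Na" for m
      using B_bound[OF that] Nu_pos by (simp add: divide_le_eq mult.commute)
    have "(\<Sum>m<Na. (\<Sum>i<Nu. real (Delta (f (xs i) m) (a (ys i) m)))) \<le> (\<Sum>m<Na. real Nu * B m)"
      by (rule sum_mono) (simp add: h)
    thus ?thesis by simp
  qed
  finally have main: "real (card K) * real t \<le> 2 * real Nu * (\<Sum>m<Na. B m)"
    by (simp add: sum_distrib_left mult.assoc)
  have "real (card K) / real Nu = real (card K) * real t / (real Nu * real t)" using tpos by simp
  also have "\<dots> \<le> 2 * real Nu * (\<Sum>m<Na. B m) / (real Nu * real t)"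
    by (rule divide_right_mono[OF main]) simp
  also have "\<dots> = 2 * (\<Sum>m<Na. B m) / real t" using Nu_pos by simp
  also have "\<dots> = 2 * real Na * ((\<Sum>m<Na. B m) / real Na) / real t" using \<open>Na > 0\<close> by simp
  finally show ?thesis by (simp add: K_def t_def)
qed

end
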